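(* There is an absolute constant $C>0$ such that for every $n\ge 2$ and all integers $b_1,\dots,b_n\ge 0$ with $b_1+\dots+b_n=n-1$, every equilibrium graph of $(b_1,\dots,b_n)$-BG in the SUM version has diameter at most $C\log n$.
   Context: Bounded budget network creation game $(b_1,\dots,b_n)$-BG: $n$ players with integer budgets $0\le b_i\le n-1$. A strategy of player $i$ is a set $S_i\subseteq\{1,\dots,n\}\setminus\{i\}$ with $|S_i|=b_i$; a profile is realized by the directed graph $G$ on $u_1,\dots,u_n$ with an arc $\overrightarrow{u_iu_j}$ iff $j\in S_i$. $U(G)$ is the undirected multigraph obtained by ignoring directions; $\operatorname{dist}(u,v)$ is the distance in $U(G)$, defined as $n^2$ between different components. SUM cost: $c_{SUM}(u)=\sum_v\operatorname{dist}(u,v)$. An equilibrium graph in the SUM version is a realization in which no vertex can decrease its SUM cost by changing its own strategy while the other strategies are fixed. The diameter is the maximum distance between two vertices. Logarithms are base 2. *)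

theory Defs
  imports Complex_Main
begin

text \<open>Players are 0,...,n-1; a strategy profile is S :: nat => nat set,
  where S i is the set of heads of the arcs bought by player i.\<close>

definition valid_profile :: "nat \<Rightarrow> (nat \<Rightarrow> nat) \<Rightarrow> (nat \<Rightarrow> nat set) \<Rightarrow> bool" where
  "valid_profile n b S \<longleftrightarrow>
     (\<forall>i<n. S i \<subseteq> {..<n} - {i} \<and> card (S i) = b i)"

definition adj :: "(nat \<Rightarrow> nat set) \<Rightarrow> nat \<Rightarrow> nat \<Rightarrow> bool" where
  "adj S u v \<longleftrightarrow> v \<in> S u \<or> u \<in> S v"

definition walk :: "nat \<Rightarrow> (nat \<Rightarrow> nat set) \<Rightarrow> nat \<Rightarrow> nat \<Rightarrow> nat \<Rightarrow> bool" where
  "walk n S u v k \<longleftrightarrow>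
     (\<exists>p :: nat \<Rightarrow> nat. p 0 = u \<and> p k = v \<and> (\<forall>i\<le>k. p i < n)
        \<and> (\<forall>i<k. adj S (p i) (p (Suc i))))"

definition gdist :: "nat \<Rightarrow> (nat \<Rightarrow> nat set) \<Rightarrow> nat \<Rightarrow> nat \<Rightarrow> nat" where
  "gdist n S u v = (if \<exists>k. walk n S u v k then (LEAST k. walk n S u v k) else n^2)"

definition sum_cost :: "nat \<Rightarrow> (nat \<Rightarrow> nat set) \<Rightarrow> nat \<Rightarrow> nat" where
  "sum_cost n S u = (\<Sum>v<n. gdist n S u v)"

definition sum_equilibrium :: "nat \<Rightarrow> (nat \<Rightarrow> nat) \<Rightarrow> (nat \<Rightarrow> nat set) \<Rightarrow> bool" where
  "sum_equilibrium n b S \<longleftrightarrow> valid_profile n b S \<and>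
     (\<forall>i<n. \<forall>T. T \<subseteq> {..<n} - {i} \<and> card T = b i \<longrightarrow>
        sum_cost n S i \<le> sum_cost n (S(i := T)) i)"

definition diameter :: "nat \<Rightarrow> (nat \<Rightarrow> nat set) \<Rightarrow> nat" where
  "diameter n S = Max {gdist n S u v | u v. u < n \<and> v < n}"

end

theory Submission
  imports Defs
begin


definition iswalk :: "nat \<Rightarrow> (nat \<Rightarrow> nat set) \<Rightarrow> (nat \<Rightarrow> nat) \<Rightarrow> nat \<Rightarrow> bool" where
  "iswalk n S p k \<longleftrightarrow> (\<forall>i\<le>k. p i < n) \<and> (\<forall>i<k. adj S (p i) (p (Suc i)))"

definition reach :: "nat \<Rightarrow> (nat \<Rightarrow> nat set) \<Rightarrow> nat \<Rightarrow> nat \<Rightarrow> bool" where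
  "reach n S u v \<longleftrightarrow> (\<exists>k. walk n S u v k)"

lemma walk_iff: "walk n S u v k \<longleftrightarrow> (\<exists>p. p 0 = u \<and> p k = v \<and> iswalk n S p k)"
  unfolding walk_def iswalk_def by auto

lemma adj_sym: "adj S u v \<Longrightarrow> adj S v u"
  unfolding adj_def by auto

lemma walk_refl: "u < n \<Longrightarrow> walk n S u u 0"
  unfolding walk_def by (rule exI[of _ "\<lambda>_. u"]) auto

lemma walk_edge: "u < n \<Longrightarrow> v < n \<Longrightarrow> adj S u v \<Longrightarrow> walk n S u v 1"
  unfolding walk_def
  by (rule exI[of _ "\<lambda>i. if i = 0 then u else v"]) (auto simp: less_Suc_eq_le)

lemma walk_lt: "walk n S u v k \<Longrightarrow> u < n \<and> v < n"
  unfolding walk_def by force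

lemma walk_trans:
  assumes "walk n S u v k" "walk n S v w l"
  shows "walk n S u w (k + l)"
proof -
  from assms(1) obtain p where p: "p 0 = u" "p k = v" "\<forall>i\<le>k. p i < n" "\<forall>i<k. adj S (p i) (p (Suc i))"
    unfolding walk_def by blast
  from assms(2) obtain q where q: "q 0 = v" "q l = w" "\<forall>i\<le>l. q i < n" "\<forall>i<l. adj S (q i) (q (Suc i))"
    unfolding walk_def by blast
  define r where "r i = (if i \<le> k then p i else q (i - k))" for i
  have "r 0 = u" using p by (simp add: r_def)
  moreover have "r (k + l) = w" using p q by (cases l) (simp_all add: r_def)
  moreover have "\<forall>i\<le>k+l. r i < n" using p q by (simp add: r_def)
  moreover have "\<forall>i<k+l. adj S (r i) (r (Suc i))"
  proof (intro allI impI)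
    fix i assume i: "i < k + l"
    show "adj S (r i) (r (Suc i))"
    proof (cases "i < k")
      case True then show ?thesis using p by (simp add: r_def)
    next
      case False
      then have "i - k < l" "Suc i - k = Suc (i - k)" using i by auto
      then show ?thesis using q False p(2) by (auto simp: r_def)
    qed
  qed
  ultimately show ?thesis unfolding walk_def by blast
qed

lemma walk_rev:
  assumes "walk n S u v k" shows "walk n S v u k"
proof -
  from assms obtain p where p: "p 0 = u" "p k = v" "\<forall>i\<le>k. p i < n" "\<forall>i<k. adj S (p i) (p (Suc i))"
    unfolding walk_def by blast
  define r where "r i = p (k - i)" for i
  have "\<forall>i<k. adj S (r i) (r (Suc i))"
  proof (intro allI impI)
    fix i assume i: "i < k"
    have "adj S (p (k - Suc i)) (p (Suc (k - Suc i)))" using p i by auto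
    moreover have "Suc (k - Suc i) = k - i" using i by auto
    ultimately show "adj S (r i) (r (Suc i))" by (auto simp: r_def intro: adj_sym)
  qed
  moreover have "\<forall>i\<le>k. r i < n" using p by (simp add: r_def)
  ultimately show ?thesis unfolding walk_def using p by (intro exI[of _ r]) (auto simp: r_def)
qed

lemma subwalk:
  assumes "iswalk n S p k" "i \<le> j" "j \<le> k"
  shows "walk n S (p i) (p j) (j - i)"
  unfolding walk_def using assms unfolding iswalk_def
  by (intro exI[of _ "\<lambda>m. p (m + i)"]) auto

lemma reach_refl: "u < n \<Longrightarrow> reach n S u u"
  using walk_refl reach_def by blast
lemma reach_sym: "reach n S u v \<Longrightarrow> reach n S v u"
  using walk_rev reach_def by blast
lemma reach_trans: "reach n S u v \<Longrightarrow> reach n S v w \<Longrightarrow> reach n S u w"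
  unfolding reach_def using walk_trans by blast
lemma reach_edge: "u < n \<Longrightarrow> v < n \<Longrightarrow> adj S u v \<Longrightarrow> reach n S u v"
  using walk_edge reach_def by blast
lemma reach_lt: "reach n S u v \<Longrightarrow> u < n \<and> v < n"
  using walk_lt reach_def by blast

lemma gdist_le: "walk n S u v k \<Longrightarrow> gdist n S u v \<le> k"
  unfolding gdist_def by (auto intro: Least_le)

lemma gdist_walk: "reach n S u v \<Longrightarrow> walk n S u v (gdist n S u v)"
  unfolding gdist_def reach_def by (auto intro: LeastI_ex)

lemma gdist_unreach: "\<not> reach n S u v \<Longrightarrow> gdist n S u v = n^2"
  unfolding gdist_def reach_def by auto

lemma gdist_sym: "gdist n S u v = gdist n S v u"
proof (cases "reach n S u v")
  case True
  then have "reach n S v u" by (rule reach_sym)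
  have "gdist n S u v \<le> gdist n S v u" using gdist_walk[OF \<open>reach n S v u\<close>] walk_rev gdist_le by blast
  moreover have "gdist n S v u \<le> gdist n S u v" using gdist_walk[OF True] walk_rev gdist_le by blast
  ultimately show ?thesis by simp
next
  case False
  then have "\<not> reach n S v u" using reach_sym by blast
  then show ?thesis using False gdist_unreach by simp
qed

lemma gdist_self: "u < n \<Longrightarrow> gdist n S u u = 0"
  using gdist_le[OF walk_refl] by force

lemma gdist_zero: "reach n S u v \<Longrightarrow> gdist n S u v = 0 \<Longrightarrow> u = v"
  using gdist_walk unfolding walk_def by force

lemma gdist_triangle:
  assumes "reach n S u v" "reach n S v w"
  shows "gdist n S u w \<le> gdist n S u v + gdist n S v w"
  using gdist_le[OF walk_trans[OF gdist_walk[OF assms(1)] gdist_walk[OF assms(2)]]] .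

lemma gdist_edge: "u < n \<Longrightarrow> v < n \<Longrightarrow> adj S u v \<Longrightarrow> gdist n S u v \<le> 1"
  using gdist_le walk_edge by blast

lemma gdist_bound:
  assumes "reach n S u v" shows "gdist n S u v \<le> n - 1"
proof (rule ccontr)
  assume c: "\<not> gdist n S u v \<le> n - 1"
  define k where "k = gdist n S u v"
  obtain p where p: "p 0 = u" "p k = v" "iswalk n S p k"
    using gdist_walk[OF assms] walk_iff k_def by metis
  have "p ` {..k} \<subseteq> {..<n}" using p(3) unfolding iswalk_def by auto
  then have "card (p ` {..k}) \<le> n" by (metis card_lessThan card_mono finite_lessThan)
  moreover have "card {..k} = k + 1" by simp
  ultimately have "\<not> inj_on p {..k}" using c k_def
  proof -
    assume a: "card (p ` {..k}) \<le> n" "card {..k} = k + 1"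
    show ?thesis
    proof
      assume "inj_on p {..k}"
      then have "card (p ` {..k}) = k + 1" using a(2) card_image by metis
      then show False using a(1) c k_def by linarith
    qed
  qed
  then obtain i j where ij: "i \<le> k" "j \<le> k" "i \<noteq> j" "p i = p j" unfolding inj_on_def by auto
  have "\<exists>i j. i < j \<and> j \<le> k \<and> p i = p j"
    using ij by (metis linorder_neqE_nat le_less_trans less_imp_le)
  then obtain i j where ij: "i < j" "j \<le> k" "p i = p j" by blast
  have "walk n S (p 0) (p i) (i - 0)" using subwalk[OF p(3), of 0 i] ij by simp
  moreover have "walk n S (p j) (p k) (k - j)" using subwalk[OF p(3), of j k] ij by simp
  ultimately have "walk n S u v (i + (k - j))" using walk_trans p ij(3) by fastforce
  then have "k \<le> i + (k - j)" using gdist_le k_def by blast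
  then show False using ij by linarith
qed

lemma gdist_le_sq: "gdist n S u v \<le> n^2"
proof (cases "reach n S u v")
  case True
  then have "gdist n S u v \<le> n - 1" by (rule gdist_bound)
  moreover have "n - 1 \<le> n^2" by (simp add: power2_eq_square) (metis diff_le_self le_trans mult_le_mono1 le_square)
  ultimately show ?thesis by linarith
qed (simp add: gdist_unreach)




lemma walk_transfer:
  assumes "\<And>a b. a < n \<Longrightarrow> b < n \<Longrightarrow> adj S a b \<Longrightarrow> reach n S' a b" "walk n S u v k"
  shows "reach n S' u v"
proof -
  from assms(2) obtain p where p: "p 0 = u" "p k = v" "iswalk n S p k" using walk_iff by metis
  have "m \<le> k \<Longrightarrow> reach n S' u (p m)" for m
  proof (induction m)
    case 0 then show ?case using p reach_refl unfolding iswalk_def by auto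
  next
    case (Suc m)
    then have "reach n S' (p m) (p (Suc m))" using assms(1) p(3) unfolding iswalk_def by auto
    then show ?case using Suc reach_trans by auto
  qed
  then show ?thesis using p by auto
qed

lemma reach_transfer:
  assumes "\<And>a b. a < n \<Longrightarrow> b < n \<Longrightarrow> adj S a b \<Longrightarrow> reach n S' a b" "reach n S u v"
  shows "reach n S' u v"
  using walk_transfer[OF assms(1)] assms(2) unfolding reach_def by blast

lemma adj_upd:
  assumes "adj S a b" "\<not>(a = x \<and> b = y)" "\<not>(a = y \<and> b = x)" "S x - {y} \<subseteq> T"
  shows "adj (S(x := T)) a b"
  using assms unfolding adj_def by auto

lemma mem_upd:
  assumes "j \<in> S i" "(i, j) \<noteq> (x, y)"
  shows "j \<in> (S(x := S x - {y})) i"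
  using assms by auto

locale vgraph =
  fixes n :: nat and S :: "nat \<Rightarrow> nat set"
  assumes valid: "\<And>i. i < n \<Longrightarrow> S i \<subseteq> {..<n}"
begin

definition rt :: "nat \<Rightarrow> nat" where "rt z = (LEAST r. reach n S z r)"
definition ht :: "nat \<Rightarrow> nat" where "ht z = gdist n S (rt z) z"

lemma rt_reach: "z < n \<Longrightarrow> reach n S z (rt z) \<and> rt z \<le> z"
  unfolding rt_def using reach_refl by (metis LeastI Least_le)

lemma rt_eq: "reach n S a b \<Longrightarrow> rt a = rt b"
proof -
  assume r: "reach n S a b"
  have "(\<lambda>r. reach n S a r) = (\<lambda>r. reach n S b r)"
    using r reach_trans reach_sym by (intro ext) blast
  then show ?thesis unfolding rt_def by simp
qed

lemma rt_rt: "z < n \<Longrightarrow> rt (rt z) = rt z"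
  using rt_reach rt_eq by metis

lemma par_ex:
  assumes z: "z < n" "rt z \<noteq> z"
  shows "\<exists>q. q < n \<and> adj S q z \<and> rt q = rt z \<and> ht q < ht z"
proof -
  have r: "reach n S (rt z) z" using rt_reach[OF z(1)] reach_sym by blast
  define k where "k = ht z"
  obtain p where p: "p 0 = rt z" "p k = z" "iswalk n S p k"
    using gdist_walk[OF r] walk_iff k_def ht_def by metis
  have "k \<noteq> 0" using gdist_zero[OF r] z k_def ht_def by auto
  define q where "q = p (k - 1)"
  have qn: "q < n" using p(3) unfolding iswalk_def q_def by auto
  have aq: "adj S q z" using p(3) \<open>k \<noteq> 0\<close> p(2) unfolding iswalk_def q_def
    by (metis Suc_pred' bot_nat_0.not_eq_extremum diff_less zero_less_one)
  have rq: "rt q = rt z" using rt_eq reach_edge[OF qn z(1) aq] by blast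
  have "walk n S (p 0) (p (k - 1)) (k - 1 - 0)" using subwalk[OF p(3), of 0 "k - 1"] by simp
  then have "gdist n S (rt z) q \<le> k - 1" using p(1) q_def gdist_le by simp
  then have "ht q < ht z" using rq \<open>k \<noteq> 0\<close> k_def ht_def by simp
  then show ?thesis using qn aq rq by blast
qed

definition par :: "nat \<Rightarrow> nat" where
  "par z = (SOME q. q < n \<and> adj S q z \<and> rt q = rt z \<and> ht q < ht z)"

lemma par: "z < n \<Longrightarrow> rt z \<noteq> z \<Longrightarrow> par z < n \<and> adj S (par z) z \<and> rt (par z) = rt z \<and> ht (par z) < ht z"
  unfolding par_def using par_ex by (rule someI_ex)

definition arc :: "nat \<Rightarrow> nat \<times> nat" where
  "arc z = (if par z \<in> S z then (z, par z) else (par z, z))"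

definition NR where "NR = {z. z < n \<and> rt z \<noteq> z}"
definition Arcs where "Arcs = Sigma {..<n} S"

lemma finite_Arcs: "finite Arcs"
proof -
  have "Arcs \<subseteq> {..<n} \<times> {..<n}" unfolding Arcs_def using valid by auto
  then show ?thesis by (rule finite_subset) auto
qed

lemma card_Arcs: "card Arcs = (\<Sum>i<n. card (S i))"
  unfolding Arcs_def
  by (rule card_SigmaI) (auto intro: finite_subset[OF valid])

lemma arc_in: "z \<in> NR \<Longrightarrow> arc z \<in> Arcs"
  using par[of z] unfolding NR_def arc_def Arcs_def adj_def by auto

lemma arc_inj: "inj_on arc NR"
proof
  fix a b assume a: "a \<in> NR" and b: "b \<in> NR" and e: "arc a = arc b"
  show "a = b"
  proof (rule ccontr)
    assume ne: "a \<noteq> b"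
    have "a = par b \<and> b = par a" using e ne unfolding arc_def by (auto split: if_splits)
    moreover have "ht (par a) < ht a" "ht (par b) < ht b" using par[of a] par[of b] a b unfolding NR_def by auto
    ultimately show False by (metis less_asym)
  qed
qed

lemma card_NR: "card NR \<le> card Arcs"
  using card_inj_on_le[OF arc_inj] arc_in finite_Arcs by blast

lemma keep:
  assumes e: "(x, y) \<in> Arcs" "(x, y) \<notin> arc ` NR" and z: "z < n"
  shows "reach n (S(x := S x - {y})) z (rt z)"
  using z
proof (induction "ht z" arbitrary: z rule: less_induct)
  case less
  show ?case
  proof (cases "rt z = z")
    case True then show ?thesis using reach_refl less.prems by metis
  next
    case False
    then have zNR: "z \<in> NR" using less.prems unfolding NR_def by auto
    note pz = par[OF less.prems False]
    have ne: "arc z \<noteq> (x, y)" using e zNR by force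
    have "adj (S(x := S x - {y})) z (par z)"
    proof (cases "par z \<in> S z")
      case True
      then show ?thesis using mem_upd[of "par z" S z x y, OF True] ne unfolding arc_def adj_def by auto
    next
      case False
      then have "z \<in> S (par z)" using pz unfolding adj_def by auto
      then show ?thesis using mem_upd[of z S "par z" x y] ne False unfolding arc_def adj_def by auto
    qed
    then have "reach n (S(x := S x - {y})) z (par z)" using reach_edge pz less.prems by blast
    moreover have "reach n (S(x := S x - {y})) (par z) (rt (par z))"
      using less.hyps pz by blast
    ultimately show ?thesis using pz reach_trans by metis
  qed
qed

lemma keep_xy:
  assumes e: "(x, y) \<in> Arcs" "(x, y) \<notin> arc ` NR"
  shows "reach n (S(x := S x - {y})) x y"
proof -
  have xy: "x < n" "y < n" "y \<in> S x" using e valid unfolding Arcs_def by auto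
  have "rt x = rt y" using rt_eq reach_edge[OF xy(1,2)] xy(3) unfolding adj_def by blast
  then show ?thesis using keep[OF e xy(1)] keep[OF e xy(2)] reach_sym reach_trans by metis
qed

lemma connected_rt: "(\<And>u v. u < n \<Longrightarrow> v < n \<Longrightarrow> reach n S u v) \<Longrightarrow> z < n \<Longrightarrow> rt z = 0"
  unfolding rt_def by (metis (no_types, lifting) Least_eq_0 gr_implies_not0 neq0_conv)

lemma connected_card: 
  assumes "\<And>u v. u < n \<Longrightarrow> v < n \<Longrightarrow> reach n S u v" 
  shows "n - 1 \<le> card Arcs"
proof -
  have "NR = {..<n} - {0}" using connected_rt[OF assms] unfolding NR_def by auto
  then have "card NR = n - 1" by (cases "n = 0") auto
  then show ?thesis using card_NR by simp
qed

end




lemma adj_upd_sub: "adj (S(x := S x - {y})) a b \<Longrightarrow> S x - {y} \<subseteq> T \<Longrightarrow> adj (S(x := T)) a b"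
  unfolding adj_def by (auto split: if_splits)

lemma eq_valid:
  assumes "sum_equilibrium n b S"
  shows "\<And>i. i < n \<Longrightarrow> S i \<subseteq> {..<n} - {i} \<and> card (S i) = b i"
  using assms unfolding sum_equilibrium_def valid_profile_def by auto

lemma eq_connected:
  assumes eq: "sum_equilibrium n b S" and n2: "n \<ge> 2" and sb: "(\<Sum>i<n. b i) = n - 1"
    and uv: "u < n" "v < n"
  shows "reach n S u v"
proof (rule ccontr)
  assume nr: "\<not> reach n S u v"
  note val = eq_valid[OF eq]
  interpret vgraph n S using val by unfold_locales auto
  have cA: "card Arcs = n - 1" using card_Arcs sb val by simp
  obtain w where w: "w < n" "\<not> reach n S 0 w"
  proof -
    have "\<not> reach n S 0 u \<or> \<not> reach n S 0 v"
      using nr reach_sym[of n S 0 u] reach_trans[of n S u 0 v] by blast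
    then show ?thesis using that uv by blast
  qed
  have r0: "rt 0 = 0" using rt_reach[of 0] n2 by auto
  have rwn: "rt w < n" using rt_reach[OF w(1)] reach_lt by blast
  have rw: "rt (rt w) = rt w" using rt_rt w by auto
  have rw0: "rt w \<noteq> 0"
    using rt_reach[OF w(1)] w(2) reach_sym by metis
  have "NR \<subseteq> {..<n} - {0, rt w}" unfolding NR_def using r0 rw by auto
  then have "card NR \<le> card ({..<n} - {0, rt w})" by (intro card_mono) auto
  also have "\<dots> = n - 2" using rwn rw0 n2 by (simp add: card_Diff_subset)
  finally have c1: "card NR \<le> n - 2" .
  have "finite NR" unfolding NR_def by auto
  then have "card (arc ` NR) \<le> card NR" by (rule card_image_le)
  then have "card (arc ` NR) < card Arcs" using c1 cA n2 by linarith
  then have "\<not> Arcs \<subseteq> arc ` NR" using \<open>finite NR\<close>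
    by (meson card_mono finite_imageI leD)
  then obtain x y where xy: "(x, y) \<in> Arcs" "(x, y) \<notin> arc ` NR" by auto
  have x: "x < n" "y \<in> S x" "y < n" using xy(1) val unfolding Arcs_def by auto
  have kxy: "reach n (S(x := S x - {y})) x y" using keep_xy[OF xy] .
  obtain w' where w': "w' < n" "\<not> reach n S x w'"
  proof (cases "reach n S x 0")
    case True then show ?thesis using that w reach_trans reach_sym by metis
  next
    case False then show ?thesis using that[of 0] n2 by auto
  qed
  have w'S: "w' \<notin> S x" using w' x reach_edge unfolding adj_def by blast
  have w'x: "w' \<noteq> x" using w' reach_refl x by blast
  define T where "T = insert w' (S x - {y})"
  have fin: "finite (S x)" using val x by (meson finite_lessThan finite_subset Diff_subset)
  have cT: "card T = b x"
  proof -
    have "card T = Suc (card (S x - {y}))" unfolding T_def using w'S fin by simp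
    also have "\<dots> = card (S x)" using x fin card_Diff_singleton
      by (metis Suc_pred' card_gt_0_iff emptyE)
    finally show ?thesis using val x by simp
  qed
  have Tsub: "T \<subseteq> {..<n} - {x}" unfolding T_def using val x w' w'x by auto
  define S' where "S' = S(x := T)"
  have le: "sum_cost n S x \<le> sum_cost n S' x"
    using eq x Tsub cT unfolding sum_equilibrium_def S'_def by blast
  have tr: "reach n S' a b" if "a < n" "b < n" "adj S a b" for a b
  proof (cases "(a = x \<and> b = y) \<or> (a = y \<and> b = x)")
    case True
    have "reach n S' x y"
    proof (rule reach_transfer[OF _ kxy])
      fix a b assume ab: "a < n" "b < n" "adj (S(x := S x - {y})) a b"
      have "S x - {y} \<subseteq> T" unfolding T_def by auto
      then have "adj S' a b" unfolding S'_def using adj_upd_sub[OF ab(3)] by blast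
      then show "reach n S' a b" using reach_edge ab by blast
    qed
    then show ?thesis using True reach_sym by blast
  next
    case False
    have "S x - {y} \<subseteq> T" unfolding T_def by auto
    then have "adj S' a b" unfolding S'_def using adj_upd[OF that(3), of x y T] False by blast
    then show ?thesis using reach_edge that by blast
  qed
  define f where "f v = int (gdist n S x v) - int (gdist n S' x v)" for v
  have fb: "f v \<ge> - (int n - 2)" if "v < n" for v
  proof (cases "reach n S x v")
    case True
    then have "reach n S' x v" using reach_transfer[OF tr] by blast
    then have g1: "gdist n S' x v \<le> n - 1" by (rule gdist_bound)
    show ?thesis
    proof (cases "v = x")
      case True then show ?thesis using gdist_self x n2 by (simp add: f_def)
    next
      case False
      then have "gdist n S x v \<ge> 1" using gdist_zero[OF \<open>reach n S x v\<close>] by (cases "gdist n S x v") auto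
      then show ?thesis using g1 n2 unfolding f_def by linarith
    qed
  next
    case False
    then show ?thesis using gdist_unreach[OF False] gdist_le_sq[of n S' x v] n2 unfolding f_def by linarith
  qed
  have fw: "f w' \<ge> int n ^ 2 - 1"
  proof -
    have "adj S' x w'" unfolding S'_def T_def adj_def by simp
    then have "gdist n S' x w' \<le> 1" using gdist_edge x w' by blast
    then show ?thesis using gdist_unreach[OF w'(2)] unfolding f_def by simp
  qed
  have s1: "(\<Sum>v<n. f v) = f w' + (\<Sum>v\<in>{..<n} - {w'}. f v)"
    using w' by (simp add: sum.remove)
  have s2: "(\<Sum>v\<in>{..<n} - {w'}. f v) \<ge> (\<Sum>v\<in>{..<n} - {w'}. - (int n - 2))"
    using fb by (intro sum_mono) auto
  have s3: "(\<Sum>v\<in>{..<n} - {w'}. - (int n - 2)) = int (n - 1) * (- (int n - 2))"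
    using w' by (simp add: card_Diff_singleton)
  have "(\<Sum>v<n. f v) \<ge> int n ^ 2 - 1 + int (n - 1) * (- (int n - 2))"
    using s1 s2 s3 fw by linarith
  moreover have "int n ^ 2 - 1 + int (n - 1) * (- (int n - 2)) > 0"
    using n2 by (simp add: of_nat_diff power2_eq_square algebra_simps)
  moreover have "(\<Sum>v<n. f v) = int (sum_cost n S x) - int (sum_cost n S' x)"
    unfolding f_def sum_cost_def by (simp add: sum_subtractf)
  ultimately show False using le by linarith
qed




lemma eq_bridge:
  assumes eq: "sum_equilibrium n b S" and n2: "n \<ge> 2" and sb: "(\<Sum>i<n. b i) = n - 1"
    and x: "x < n" "y \<in> S x"
  shows "\<not> reach n (S(x := S x - {y})) x y"
proof
  assume kxy: "reach n (S(x := S x - {y})) x y"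
  note val = eq_valid[OF eq]
  define Se where "Se = S(x := S x - {y})"
  interpret vgraph n Se using val unfolding Se_def by unfold_locales auto
  have tr: "reach n Se a c" if "a < n" "c < n" "adj S a c" for a c
  proof (cases "(a = x \<and> c = y) \<or> (a = y \<and> c = x)")
    case True then show ?thesis using kxy reach_sym Se_def by blast
  next
    case False
    then have "adj Se a c" unfolding Se_def using adj_upd[OF that(3), of x y "S x - {y}"] by blast
    then show ?thesis using reach_edge that by blast
  qed
  have conn: "reach n Se u v" if "u < n" "v < n" for u v
    using eq_connected[OF eq n2 sb that] reach_transfer[OF tr] by blast
  have c1: "n - 1 \<le> card Arcs" by (rule connected_card[OF conn])
  have fin: "finite (S x)" using val x by (meson finite_lessThan finite_subset Diff_subset)
  have "card (S x) > 0" using x fin card_gt_0_iff by blast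
  moreover have "card (Se x) = card (S x) - 1" unfolding Se_def using x fin by (simp add: card_Diff_singleton)
  ultimately have cx: "card (Se x) + 1 = card (S x)" by linarith
  have "card Arcs = (\<Sum>i<n. card (Se i))" by (rule card_Arcs)
  also have "\<dots> = card (Se x) + (\<Sum>i\<in>{..<n} - {x}. card (Se i))" using x by (simp add: sum.remove)
  also have "(\<Sum>i\<in>{..<n} - {x}. card (Se i)) = (\<Sum>i\<in>{..<n} - {x}. card (S i))"
    unfolding Se_def by (intro sum.cong) auto
  finally have "card Arcs + 1 = card (S x) + (\<Sum>i\<in>{..<n} - {x}. card (S i))" using cx by linarith
  also have "\<dots> = (\<Sum>i<n. card (S i))" using x by (simp add: sum.remove)
  also have "\<dots> = n - 1" using val sb by simp
  finally show False using c1 n2 by linarith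
qed

locale tree =
  fixes n :: nat and S :: "nat \<Rightarrow> nat set"
  assumes valid: "\<And>i. i < n \<Longrightarrow> S i \<subseteq> {..<n} - {i}"
    and conn: "\<And>u v. u < n \<Longrightarrow> v < n \<Longrightarrow> reach n S u v"
    and bridge: "\<And>x y. x < n \<Longrightarrow> y \<in> S x \<Longrightarrow> \<not> reach n (S(x := S x - {y})) x y"
begin

abbreviation d where "d \<equiv> gdist n S"

definition side :: "nat \<Rightarrow> nat \<Rightarrow> nat set" where
  "side a c = {z. z < n \<and> d c z < d a z}"

lemma tri: "u < n \<Longrightarrow> v < n \<Longrightarrow> w < n \<Longrightarrow> d u w \<le> d u v + d v w"
  using gdist_triangle conn by blast

lemma arc_cut:
  assumes x: "x < n" "y \<in> S x"
    and a: "a < n" "\<not> reach n (S(x := S x - {y})) y a"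
    and z: "reach n (S(x := S x - {y})) y z"
  shows "d a z \<ge> d a x + 1 + d y z"
proof -
  define Se where "Se = S(x := S x - {y})"
  define B where "B = {z. reach n Se y z}"
  have aB: "a \<notin> B" using a B_def Se_def by auto
  have zB: "z \<in> B" using z B_def Se_def by auto
  have zn: "z < n" using z reach_lt by blast
  have yn: "y < n" using x valid by auto
  have cut: "c \<in> B \<Longrightarrow> e < n \<Longrightarrow> e \<notin> B \<Longrightarrow> adj S e c \<Longrightarrow> e = x \<and> c = y" for c e
  proof (rule ccontr)
    assume h: "c \<in> B" "e < n" "e \<notin> B" "adj S e c" "\<not> (e = x \<and> c = y)"
    have cn: "c < n" using h(1) B_def reach_lt by blast
    show False
    proof (cases "e = y \<and> c = x")
      case True
      then have "reach n Se y x" using h(1) B_def by auto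
      then show False using bridge[OF x] reach_sym Se_def by blast
    next
      case False
      then have "adj Se e c" unfolding Se_def using adj_upd[OF h(4), of x y "S x - {y}"] h(5) by blast
      then have "reach n Se c e" using reach_edge[OF cn h(2)] adj_sym by blast
      then show False using h(1,3) B_def reach_trans by blast
    qed
  qed
  define k where "k = d a z"
  obtain p where p: "p 0 = a" "p k = z" "iswalk n S p k"
    using gdist_walk[OF conn[OF a(1) zn]] walk_iff k_def by metis
  have "k \<noteq> 0"
  proof
    assume "k = 0" then show False using p aB zB by simp
  qed
  have ex: "\<exists>i. p (Suc i) \<in> B" using p(2) zB \<open>k \<noteq> 0\<close> by (metis Suc_pred' bot_nat_0.not_eq_extremum)
  define i where "i = (LEAST i. p (Suc i) \<in> B)"
  have iB: "p (Suc i) \<in> B" unfolding i_def using ex by (rule LeastI_ex)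
  have ik: "i < k"
  proof -
    have "i \<le> k - 1" unfolding i_def using p(2) zB \<open>k \<noteq> 0\<close> by (intro Least_le) simp
    then show ?thesis using \<open>k \<noteq> 0\<close> by linarith
  qed
  have piB: "p i \<notin> B"
  proof (cases i)
    case 0 then show ?thesis using p aB by simp
  next
    case (Suc j)
    have "\<not> p (Suc j) \<in> B" using not_less_Least[of j "\<lambda>i. p (Suc i) \<in> B"] Suc i_def by auto
    then show ?thesis using Suc by simp
  qed
  have "p i = x \<and> p (Suc i) = y"
    using cut[OF iB _ piB] p(3) ik unfolding iswalk_def by auto
  moreover have "walk n S (p 0) (p i) (i - 0)" using subwalk[OF p(3), of 0 i] ik by simp
  moreover have "walk n S (p (Suc i)) (p k) (k - Suc i)" using subwalk[OF p(3), of "Suc i" k] ik by simp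
  ultimately have "d a x \<le> i" "d y z \<le> k - Suc i" using gdist_le p by auto
  then show ?thesis using ik k_def by linarith
qed

lemma arc_side:
  assumes x: "x < n" "y \<in> S x" and z: "z < n"
  shows "(z \<in> side x y \<longleftrightarrow> reach n (S(x := S x - {y})) y z) \<and> (z \<notin> side x y \<longrightarrow> z \<in> side y x)"
proof -
  have yn: "y < n" using x valid by auto
  have ry: "reach n (S(x := S x - {y})) y y" using reach_refl yn by blast
  have nx: "\<not> reach n (S(x := S x - {y})) y x" using bridge[OF x] reach_sym by blast
  show ?thesis
  proof (cases "reach n (S(x := S x - {y})) y z")
    case True
    have "d x z \<ge> d x x + 1 + d y z" using arc_cut[OF x x(1) nx True] .
    then show ?thesis using True z gdist_self[OF x(1)] unfolding side_def by auto
  next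
    case False
    have "d z y \<ge> d z x + 1 + d y y" using arc_cut[OF x z False ry] .
    then have "d y z > d x z" using gdist_sym[of n S z y] gdist_sym[of n S z x] by simp
    then show ?thesis using False z unfolding side_def by auto
  qed
qed

lemma side_disj: "z \<in> side a c \<Longrightarrow> z \<notin> side c a"
  unfolding side_def by auto

lemma side_cut_arc:
  assumes x: "x < n" "y \<in> S x" and u: "u < n" "u \<notin> side x y" and z: "z \<in> side x y"
  shows "d u z \<ge> d u x + 1 + d y z"
proof -
  have zn: "z < n" using z side_def by auto
  show ?thesis using arc_cut[OF x u(1)] arc_side[OF x u(1)] arc_side[OF x zn] u z by blast
qed

lemma side_cut:
  assumes ac: "adj S a c" "a < n" "c < n" and u: "u < n" "u \<notin> side a c" and z: "z \<in> side a c"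
  shows "d u z \<ge> d u a + 1 + d c z"
proof (cases "c \<in> S a")
  case True show ?thesis using side_cut_arc[OF ac(2) True u z] .
next
  case False
  then have aS: "a \<in> S c" using ac unfolding adj_def by auto
  have zn: "z < n" using z side_def by auto
  have "z \<notin> side c a" using z side_disj by blast
  moreover have "u \<in> side c a" using arc_side[OF ac(3) aS u(1)] u(2) side_disj by blast
  ultimately have "d z u \<ge> d z c + 1 + d a u" using side_cut_arc[OF ac(3) aS zn] by blast
  then show ?thesis using gdist_sym[of n S z u] gdist_sym[of n S z c] gdist_sym[of n S a u] by simp
qed

lemma side_split:
  assumes ac: "adj S a c" "a < n" "c < n" and z: "z < n"
  shows "z \<in> side a c \<or> z \<in> side c a"
proof (cases "c \<in> S a")
  case True then show ?thesis using arc_side[OF ac(2) True z] by blast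
next
  case False
  then have aS: "a \<in> S c" using ac unfolding adj_def by auto
  then show ?thesis using arc_side[OF ac(3) aS z] by blast
qed

lemma side_eq:
  assumes ac: "adj S a c" "a < n" "c < n" and z: "z \<in> side a c"
  shows "d a z = 1 + d c z"
proof -
  have "a \<notin> side a c" unfolding side_def using gdist_self[OF ac(2)] by auto
  then have "d a z \<ge> d a a + 1 + d c z" using side_cut[OF ac ac(2) _ z] by blast
  moreover have "d a z \<le> d a c + d c z" using tri ac z side_def by auto
  moreover have "d a c \<le> 1" using gdist_edge ac by blast
  ultimately show ?thesis using gdist_self[OF ac(2)] by linarith
qed

end




lemma iswalk_avoid:
  assumes "iswalk n S p k" "\<forall>i\<le>k. p i \<noteq> m" "m = x \<or> m = y" "S x - {y} \<subseteq> T"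
  shows "iswalk n (S(x := T)) p k"
  unfolding iswalk_def
proof (intro conjI allI impI)
  fix i assume "i \<le> k" then show "p i < n" using assms(1) unfolding iswalk_def by auto
next
  fix i assume i: "i < k"
  have a: "adj S (p i) (p (Suc i))" using assms(1) i unfolding iswalk_def by auto
  have "p i \<noteq> m" "p (Suc i) \<noteq> m" using assms(2) i by auto
  then show "adj (S(x := T)) (p i) (p (Suc i))"
    using adj_upd[OF a _ _ assms(4)] assms(3) by blast
qed

lemma sum_split_if:
  assumes "B \<subseteq> {..<(n::nat)}"
  shows "(\<Sum>z<n. if z \<in> B then f z else g z) = (\<Sum>z\<in>B. f z) + (\<Sum>z\<in>{..<n} - B. g z)"
proof -
  have "(\<Sum>z<n. if z \<in> B then f z else g z) = (\<Sum>z\<in>{..<n} - B. if z \<in> B then f z else g z) + (\<Sum>z\<in>B. if z \<in> B then f z else g z)"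
    using sum.subset_diff[OF assms finite_lessThan, of "\<lambda>z. if z \<in> B then f z else g z"] by simp
  also have "(\<Sum>z\<in>{..<n} - B. if z \<in> B then f z else g z) = (\<Sum>z\<in>{..<n} - B. g z)" by (intro sum.cong) auto
  also have "(\<Sum>z\<in>B. if z \<in> B then f z else g z) = (\<Sum>z\<in>B. f z)" by (intro sum.cong) auto
  finally show ?thesis by (simp add: add.commute)
qed

context tree begin

lemma through:
  assumes "iswalk n S p k" "j \<le> k" "k = d (p 0) (p k)"
  shows "d (p 0) (p j) + d (p j) (p k) \<le> k"
proof -
  have "walk n S (p 0) (p j) (j - 0)" using subwalk[OF assms(1), of 0 j] assms by simp
  moreover have "walk n S (p j) (p k) (k - j)" using subwalk[OF assms(1), of j k] assms by simp
  ultimately have "d (p 0) (p j) \<le> j" "d (p j) (p k) \<le> k - j" using gdist_le by auto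
  then show ?thesis using assms(2) by linarith
qed

lemma d_pos: "u < n \<Longrightarrow> v < n \<Longrightarrow> u \<noteq> v \<Longrightarrow> d u v \<ge> 1"
  using gdist_zero conn by (metis less_one not_le)

lemma median:
  assumes x: "x < n" "y \<in> S x" and w: "w \<in> side x y" "w \<noteq> y"
    and eqx: "\<forall>T. T \<subseteq> {..<n} - {x} \<and> card T = card (S x) \<longrightarrow> sum_cost n S x \<le> sum_cost n (S(x := T)) x"
  shows "(\<Sum>z\<in>side x y. d y z) \<le> (\<Sum>z\<in>side x y. d w z)"
proof -
  define B where "B = side x y"
  have yn: "y < n" "y \<noteq> x" using x valid by auto
  have axy: "adj S x y" using x adj_def by auto
  have dxy: "d x y = 1" using gdist_edge[OF x(1) yn(1) axy] d_pos[OF x(1) yn(1)] yn(2) by auto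
  have xB: "x \<notin> B" unfolding B_def side_def using gdist_self[OF x(1)] by auto
  have yB: "y \<in> B" unfolding B_def side_def using gdist_self[OF yn(1)] dxy yn by auto
  have wn: "w < n" using w side_def by auto
  have Bn: "B \<subseteq> {..<n}" unfolding B_def side_def by auto
  have dxw: "d x w = 1 + d y w" using side_eq[OF axy x(1) yn(1) w(1)] .
  have wS: "w \<notin> S x"
  proof
    assume "w \<in> S x"
    then have "d x w \<le> 1" using gdist_edge[OF x(1) wn] adj_def by auto
    then show False using dxw d_pos[OF yn(1) wn] w(2) by auto
  qed
  have wx: "w \<noteq> x" using xB w B_def by auto
  have "S x \<subseteq> {..<n}" using valid x by auto
  then have fin: "finite (S x)" using finite_subset by blast
  define T where "T = insert w (S x - {y})"
  have cT: "card T = card (S x)"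
  proof -
    have "card T = Suc (card (S x - {y}))" unfolding T_def using wS fin by simp
    moreover have "card (S x) > 0" using x fin card_gt_0_iff by blast
    moreover have "card (S x - {y}) = card (S x) - 1" using x fin by (simp add: card_Diff_singleton)
    ultimately show ?thesis by linarith
  qed
  have Tsub: "T \<subseteq> {..<n} - {x}" unfolding T_def using valid x wn wx by auto
  have TS: "S x - {y} \<subseteq> T" unfolding T_def by auto
  define S' where "S' = S(x := T)"
  have le: "sum_cost n S x \<le> sum_cost n S' x" using eqx Tsub cT S'_def by blast
  have out: "gdist n S' x z \<le> d x z" if z: "z < n" "z \<notin> B" for z
  proof -
    define k where "k = d x z"
    obtain p where p: "p 0 = x" "p k = z" "iswalk n S p k"
      using gdist_walk[OF conn[OF x(1) z(1)]] walk_iff k_def by metis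
    have "\<forall>j\<le>k. p j \<noteq> y"
    proof (intro allI impI notI)
      fix j assume j: "j \<le> k" "p j = y"
      have "d x y + d y z \<le> k" using through[OF p(3) j(1)] p j k_def by simp
      moreover have "d z y \<ge> d z x + 1 + d y y"
        using side_cut[OF axy x(1) yn(1) z(1)] z(2) yB B_def by blast
      ultimately show False using gdist_sym[of n S z y] gdist_sym[of n S z x] k_def by simp
    qed
    then have "iswalk n S' p k" using iswalk_avoid[OF p(3) _ _ TS] S'_def by blast
    then have "walk n S' x z k" using p walk_iff by blast
    then show ?thesis using gdist_le k_def by blast
  qed
  have inn: "gdist n S' x z \<le> 1 + d w z" if z: "z \<in> B" for z
  proof -
    have zn: "z < n" using z Bn by auto
    define k where "k = d w z"
    obtain p where p: "p 0 = w" "p k = z" "iswalk n S p k"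
      using gdist_walk[OF conn[OF wn zn]] walk_iff k_def by metis
    have "\<forall>j\<le>k. p j \<noteq> x"
    proof (intro allI impI notI)
      fix j assume j: "j \<le> k" "p j = x"
      have "d w x + d x z \<le> k" using through[OF p(3) j(1)] p j k_def by simp
      moreover have "d x z = 1 + d y z" using side_eq[OF axy x(1) yn(1)] z B_def by blast
      moreover have "d w z \<le> d w y + d y z" using tri wn yn zn by blast
      ultimately show False using dxw gdist_sym[of n S w x] gdist_sym[of n S w y] k_def by simp
    qed
    then have "iswalk n S' p k" using iswalk_avoid[OF p(3) _ _ TS] S'_def by blast
    then have "walk n S' w z k" using p walk_iff by blast
    moreover have "walk n S' x w 1" using walk_edge[OF x(1) wn] unfolding S'_def T_def adj_def by simp
    ultimately have "walk n S' x z (1 + k)" using walk_trans by blast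
    then show ?thesis using gdist_le k_def by blast
  qed
  have c1: "sum_cost n S x = (\<Sum>z<n. if z \<in> B then 1 + d y z else d x z)"
    unfolding sum_cost_def
    using side_eq[OF axy x(1) yn(1)] B_def by (intro sum.cong) auto
  have c2: "sum_cost n S' x \<le> (\<Sum>z<n. if z \<in> B then 1 + d w z else d x z)"
    unfolding sum_cost_def using out inn by (intro sum_mono) auto
  have "(\<Sum>z\<in>B. 1 + d y z) + (\<Sum>z\<in>{..<n} - B. d x z) \<le> (\<Sum>z\<in>B. 1 + d w z) + (\<Sum>z\<in>{..<n} - B. d x z)"
  proof -
    have e1: "(\<Sum>z<n. if z \<in> B then 1 + d y z else d x z) = (\<Sum>z\<in>B. 1 + d y z) + (\<Sum>z\<in>{..<n} - B. d x z)"
      by (rule sum_split_if[OF Bn])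
    have e2: "(\<Sum>z<n. if z \<in> B then 1 + d w z else d x z) = (\<Sum>z\<in>B. 1 + d w z) + (\<Sum>z\<in>{..<n} - B. d x z)"
      by (rule sum_split_if[OF Bn])
    show ?thesis using le c1 c2 e1 e2 by linarith
  qed
  then have "(\<Sum>z\<in>B. 1 + d y z) \<le> (\<Sum>z\<in>B. 1 + d w z)" by linarith
  moreover have "(\<Sum>z\<in>B. 1 + d y z) = card B + (\<Sum>z\<in>B. d y z)" by (subst sum.distrib) simp
  moreover have "(\<Sum>z\<in>B. 1 + d w z) = card B + (\<Sum>z\<in>B. d w z)" by (subst sum.distrib) simp
  ultimately show ?thesis unfolding B_def by linarith
qed

end




lemma iswalk_rev: "iswalk n S p D \<Longrightarrow> iswalk n S (\<lambda>k. p (D - k)) D"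
  unfolding iswalk_def
proof (intro conjI allI impI)
  fix i assume "(\<forall>i\<le>D. p i < n) \<and> (\<forall>i<D. adj S (p i) (p (Suc i)))" "i \<le> D"
  then show "p (D - i) < n" by auto
next
  fix i assume h: "(\<forall>i\<le>D. p i < n) \<and> (\<forall>i<D. adj S (p i) (p (Suc i)))" "i < D"
  then have "adj S (p (D - Suc i)) (p (Suc (D - Suc i)))" by auto
  moreover have "Suc (D - Suc i) = D - i" using h by auto
  ultimately show "adj S (p (D - i)) (p (D - Suc i))" using adj_sym by metis
qed

locale tree_eq = tree +
  assumes eqx: "\<And>x. x < n \<Longrightarrow> \<forall>T. T \<subseteq> {..<n} - {x} \<and> card T = card (S x) \<longrightarrow> sum_cost n S x \<le> sum_cost n (S(x := T)) x"
begin

context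
  fixes p D
  assumes pw: "iswalk n S p D" and pD: "D = d (p 0) (p D)"
begin

lemma pn: "i \<le> D \<Longrightarrow> p i < n" using pw iswalk_def by auto

lemma padj: "i < D \<Longrightarrow> adj S (p i) (p (Suc i))" using pw iswalk_def by auto

lemma pdist: "i \<le> j \<Longrightarrow> j \<le> D \<Longrightarrow> d (p i) (p j) = j - i"
proof -
  assume ij: "i \<le> j" "j \<le> D"
  have "d (p i) (p j) \<le> j - i" using gdist_le subwalk[OF pw ij] by blast
  moreover have "d (p 0) (p i) \<le> i" using gdist_le subwalk[OF pw, of 0 i] ij by fastforce
  moreover have "d (p j) (p D) \<le> D - j" using gdist_le subwalk[OF pw, of j D] ij by fastforce
  moreover have "d (p 0) (p j) \<le> d (p 0) (p i) + d (p i) (p j)" using tri pn ij by simp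
  moreover have "d (p 0) (p D) \<le> d (p 0) (p j) + d (p j) (p D)" using tri pn ij by simp
  ultimately show ?thesis using pD ij by linarith
qed

lemma pside_mono:
  assumes i: "Suc (Suc i) \<le> D"
  shows "side (p (Suc i)) (p (Suc (Suc i))) \<subseteq> side (p i) (p (Suc i))"
proof
  fix z assume z: "z \<in> side (p (Suc i)) (p (Suc (Suc i)))"
  define a where "a = p i"
  define b where "b = p (Suc i)"
  define c where "c = p (Suc (Suc i))"
  have n: "a < n" "b < n" "c < n" using pn i a_def b_def c_def by auto
  have zn: "z < n" using z side_def by auto
  have ab: "adj S a b" using padj i a_def b_def by auto
  have dab: "d a b = 1" "d b c = 1" "d a c = 2" using pdist i a_def b_def c_def by auto
  have cs: "c \<in> side a b" using dab n unfolding side_def by auto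
  show "z \<in> side (p i) (p (Suc i))"
  proof (rule ccontr)
    assume "z \<notin> side (p i) (p (Suc i))"
    then have "d z c \<ge> d z a + 1 + d b c" using side_cut[OF ab n(1,2) zn _ cs] a_def b_def by blast
    moreover have "d c z < d b z" using z b_def c_def side_def by auto
    moreover have "d b z \<le> d b a + d a z" using tri n zn by blast
    ultimately show False using dab gdist_sym[of n S z c] gdist_sym[of n S z a] gdist_sym[of n S b a] by linarith
  qed
qed

lemma pside_ne: "i < D \<Longrightarrow> p D \<in> side (p i) (p (Suc i))"
  using pdist pn unfolding side_def by auto

lemma pside_fin: "finite (side a c)"
  unfolding side_def by auto

lemma halving:
  assumes i: "Suc (Suc i) \<le> D" and arc: "p (Suc i) \<in> S (p i)"
  shows "2 * card (side (p (Suc i)) (p (Suc (Suc i)))) \<le> card (side (p i) (p (Suc i)))"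
proof -
  define x where "x = p i"
  define y where "y = p (Suc i)"
  define w where "w = p (Suc (Suc i))"
  define B where "B = side x y"
  define W where "W = side y w"
  have n: "x < n" "y < n" "w < n" using pn i x_def y_def w_def by auto
  have dd: "d y w = 1" "d x w = 2" using pdist i x_def y_def w_def by auto
  have wB: "w \<in> side x y" using dd n unfolding side_def by auto
  have wy: "w \<noteq> y" using dd gdist_self n by auto
  have med: "(\<Sum>z\<in>B. d y z) \<le> (\<Sum>z\<in>B. d w z)"
    using median[OF n(1) _ wB wy eqx[OF n(1)]] arc x_def y_def B_def by auto
  have WB: "W \<subseteq> B" using pside_mono[OF i] W_def B_def x_def y_def w_def by auto
  have yw: "adj S y w" using padj i y_def w_def by auto
  have e1: "d y z = 1 + d w z" if "z \<in> W" for z using side_eq[OF yw n(2,3)] that W_def by auto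
  have e2: "d w z = 1 + d y z" if "z \<in> B - W" for z
  proof -
    have zn: "z < n" using that B_def side_def by auto
    have "z \<in> side w y" using side_split[OF yw n(2,3) zn] that W_def by auto
    then show ?thesis using side_eq[OF adj_sym[OF yw] n(3,2)] by auto
  qed
  have fB: "finite B" using B_def pside_fin by auto
  have s1: "(\<Sum>z\<in>B. d y z) = (\<Sum>z\<in>B - W. d y z) + (\<Sum>z\<in>W. d y z)"
    using sum.subset_diff[OF WB fB] by simp
  have s2: "(\<Sum>z\<in>B. d w z) = (\<Sum>z\<in>B - W. d w z) + (\<Sum>z\<in>W. d w z)"
    using sum.subset_diff[OF WB fB] by simp
  have "(\<Sum>z\<in>W. d y z) = (\<Sum>z\<in>W. 1 + d w z)" using e1 by (intro sum.cong) auto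
  also have "\<dots> = card W + (\<Sum>z\<in>W. d w z)" by (subst sum.distrib) simp
  finally have s3: "(\<Sum>z\<in>W. d y z) = card W + (\<Sum>z\<in>W. d w z)" .
  have "(\<Sum>z\<in>B - W. d w z) = (\<Sum>z\<in>B - W. 1 + d y z)" using e2 by (intro sum.cong) auto
  also have "\<dots> = card (B - W) + (\<Sum>z\<in>B - W. d y z)" by (subst sum.distrib) simp
  finally have s4: "(\<Sum>z\<in>B - W. d w z) = card (B - W) + (\<Sum>z\<in>B - W. d y z)" .
  have "card W \<le> card (B - W)" using med s1 s2 s3 s4 by linarith
  moreover have "card (B - W) = card B - card W" using WB fB by (simp add: card_Diff_subset finite_subset)
  moreover have "card W \<le> card B" using WB fB card_mono by blast
  ultimately show ?thesis unfolding B_def W_def x_def y_def w_def by linarith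
qed

definition FF where "FF = {i. Suc (Suc i) \<le> D \<and> p (Suc i) \<in> S (p i)}"

lemma count_ind:
  "m < D \<Longrightarrow> card (side (p m) (p (Suc m))) * 2 ^ card (FF \<inter> {..<m}) \<le> card (side (p 0) (p 1))"
proof (induction m)
  case 0 then show ?case by simp
next
  case (Suc m)
  have IH: "card (side (p m) (p (Suc m))) * 2 ^ card (FF \<inter> {..<m}) \<le> card (side (p 0) (p 1))"
    using Suc by auto
  have fin: "finite (FF \<inter> {..<m})" by auto
  show ?case
  proof (cases "m \<in> FF")
    case True
    then have "FF \<inter> {..<Suc m} = insert m (FF \<inter> {..<m})" by auto
    then have c: "card (FF \<inter> {..<Suc m}) = Suc (card (FF \<inter> {..<m}))" using fin by simp
    have "2 * card (side (p (Suc m)) (p (Suc (Suc m)))) \<le> card (side (p m) (p (Suc m)))"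
      using halving True FF_def by auto
    have "card (side (p (Suc m)) (p (Suc (Suc m)))) * 2 ^ card (FF \<inter> {..<Suc m})
        = (2 * card (side (p (Suc m)) (p (Suc (Suc m))))) * 2 ^ card (FF \<inter> {..<m})" using c by simp
    also have "\<dots> \<le> card (side (p m) (p (Suc m))) * 2 ^ card (FF \<inter> {..<m})"
      by (rule mult_le_mono1) fact
    also have "\<dots> \<le> card (side (p 0) (p 1))" by (rule IH)
    finally show ?thesis .
  next
    case False
    then have "FF \<inter> {..<Suc m} = FF \<inter> {..<m}" by (auto simp: less_Suc_eq)
    moreover have "card (side (p (Suc m)) (p (Suc (Suc m)))) \<le> card (side (p m) (p (Suc m)))"
    proof -
      have "side (p (Suc m)) (p (Suc (Suc m))) \<subseteq> side (p m) (p (Suc m))"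
        using pside_mono[of m] Suc.prems by auto
      then show ?thesis using card_mono[OF pside_fin] by blast
    qed
    then have "card (side (p (Suc m)) (p (Suc (Suc m)))) * 2 ^ card (FF \<inter> {..<m})
       \<le> card (side (p m) (p (Suc m))) * 2 ^ card (FF \<inter> {..<m})" by (rule mult_le_mono1)
    ultimately have "card (side (p (Suc m)) (p (Suc (Suc m)))) * 2 ^ card (FF \<inter> {..<Suc m})
       \<le> card (side (p m) (p (Suc m))) * 2 ^ card (FF \<inter> {..<m})" by simp
    then show ?thesis using IH by (rule le_trans)
  qed
qed

lemma count_FF: "2 ^ card FF \<le> n"
proof (cases "D = 0")
  case True
  then have "FF = {}" unfolding FF_def by auto
  moreover have "n \<ge> 1" using pn by fastforce
  ultimately show ?thesis by simp
next
  case False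
  have "FF \<inter> {..<D - 1} = FF" unfolding FF_def by auto
  then have "card (side (p (D - 1)) (p (Suc (D - 1)))) * 2 ^ card FF \<le> card (side (p 0) (p 1))"
    using count_ind[of "D - 1"] False by auto
  moreover have "card (side (p (D - 1)) (p (Suc (D - 1)))) \<ge> 1"
  proof -
    have "side (p (D - 1)) (p (Suc (D - 1))) \<noteq> {}" using pside_ne[of "D - 1"] False by auto
    then show ?thesis using pside_fin card_0_eq by (metis less_one not_le)
  qed
  moreover have "card (side (p 0) (p 1)) \<le> n"
  proof -
    have "side (p 0) (p 1) \<subseteq> {..<n}" unfolding side_def by auto
    then have "card (side (p 0) (p 1)) \<le> card {..<n}" by (intro card_mono) auto
    then show ?thesis by simp
  qed
  ultimately show ?thesis
    by (metis (no_types, lifting) le_trans mult_1 mult_le_mono1)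
qed

end

end




context tree_eq begin

lemma diam_path:
  assumes pw: "iswalk n S p D" and pD: "D = d (p 0) (p D)" and n2: "n \<ge> 2"
  shows "real D \<le> 4 * log 2 (real n)"
proof -
  define q where "q = (\<lambda>k. p (D - k))"
  have qw: "iswalk n S q D" unfolding q_def by (rule iswalk_rev[OF pw])
  have qD: "D = d (q 0) (q D)" unfolding q_def using pD gdist_sym by simp
  have c1: "2 ^ card (FF p D) \<le> n" by (rule count_FF[OF pw pD])
  have c2: "2 ^ card (FF q D) \<le> n" by (rule count_FF[OF qw qD])
  have sub: "{..<D} \<subseteq> FF p D \<union> (\<lambda>i. D - 1 - i) ` FF q D \<union> {0, D - 1}"
  proof
    fix i assume i: "i \<in> {..<D}"
    then have a: "adj S (p i) (p (Suc i))" using pw iswalk_def by auto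
    show "i \<in> FF p D \<union> (\<lambda>i. D - 1 - i) ` FF q D \<union> {0, D - 1}"
    proof (cases "p (Suc i) \<in> S (p i)")
      case True
      then show ?thesis using i unfolding FF_def[OF pw pD] by (cases "Suc (Suc i) \<le> D") auto
    next
      case False
      then have pi: "p i \<in> S (p (Suc i))" using a adj_def by auto
      show ?thesis
      proof (cases "i = 0")
        case True then show ?thesis by auto
      next
        case False
        define k where "k = D - 1 - i"
        have "Suc (Suc k) \<le> D" using False i k_def by auto
        moreover have "q (Suc k) = p i" "q k = p (Suc i)" using False i k_def q_def by auto
        ultimately have "k \<in> FF q D" unfolding FF_def[OF qw qD] using pi by auto
        moreover have "i = D - 1 - k" using i k_def by auto
        ultimately show ?thesis by blast
      qed
    qed
  qed
  have fin: "finite (FF p D)" "finite (FF q D)"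
    unfolding FF_def[OF pw pD] FF_def[OF qw qD] by (auto intro: finite_subset[of _ "{..<D}"])
  have "D = card {..<D}" by simp
  also have "\<dots> \<le> card (FF p D \<union> (\<lambda>i. D - 1 - i) ` FF q D \<union> {0, D - 1})"
    using sub fin by (intro card_mono) auto
  also have "\<dots> \<le> card (FF p D) + card ((\<lambda>i. D - 1 - i) ` FF q D) + card {0, D - 1}"
    by (meson card_Un_le add_le_mono1 le_trans)
  also have "\<dots> \<le> card (FF p D) + card (FF q D) + 2"
  proof -
    have "card {0::nat, D - 1} \<le> 2" by (cases "D - 1 = 0") auto
    then show ?thesis using card_image_le[OF fin(2), of "\<lambda>i. D - 1 - i"] by linarith
  qed
  finally have D: "real D \<le> real (card (FF p D)) + real (card (FF q D)) + 2" by linarith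
  have l1: "real (card (FF p D)) \<le> log 2 (real n)" using le_log2_of_power[OF c1] .
  have l2: "real (card (FF q D)) \<le> log 2 (real n)" using le_log2_of_power[OF c2] .
  have l3: "1 \<le> log 2 (real n)" using le_log2_of_power[of 1 n] n2 by simp
  show ?thesis using D l1 l2 l3 by linarith
qed

end

theorem mainTheorem4:
  shows "\<exists>C::real. C > 0 \<and>
    (\<forall>n::nat. \<forall>b::nat \<Rightarrow> nat. \<forall>S::nat \<Rightarrow> nat set.
       n \<ge> 2 \<longrightarrow> (\<forall>i<n. b i \<le> n - 1) \<longrightarrow> (\<Sum>i<n. b i) = n - 1 \<longrightarrow>
       sum_equilibrium n b S \<longrightarrow>
       real (diameter n S) \<le> C * log 2 (real n))"
proof (intro exI[of _ 4] conjI allI impI)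
  fix n b S
  assume n2: "n \<ge> (2::nat)" and sb: "(\<Sum>i<n. b i) = n - 1" and eq: "sum_equilibrium n b S"
  note val = eq_valid[OF eq]
  interpret tree_eq n S
  proof (unfold_locales)
    show "\<And>i. i < n \<Longrightarrow> S i \<subseteq> {..<n} - {i}" using val by auto
    show "\<And>u v. u < n \<Longrightarrow> v < n \<Longrightarrow> reach n S u v" using eq_connected[OF eq n2 sb] by blast
    show "\<And>x y. x < n \<Longrightarrow> y \<in> S x \<Longrightarrow> \<not> reach n (S(x := S x - {y})) x y"
      using eq_bridge[OF eq n2 sb] by blast
    show "\<And>x. x < n \<Longrightarrow> \<forall>T. T \<subseteq> {..<n} - {x} \<and> card T = card (S x) \<longrightarrow> sum_cost n S x \<le> sum_cost n (S(x := T)) x"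
      using eq val unfolding sum_equilibrium_def by auto
  qed
  define M where "M = {gdist n S u v | u v. u < n \<and> v < n}"
  have M: "M = (\<lambda>(u, v). gdist n S u v) ` ({..<n} \<times> {..<n})" unfolding M_def by auto
  have "finite M" using M by auto
  moreover have "gdist n S 0 0 \<in> M" unfolding M_def using n2 by (intro CollectI exI[of _ 0]) auto
  ultimately have "finite M" "M \<noteq> {}" by auto
  then have "Max M \<in> M" by (rule Max_in)
  then obtain u v where uv: "u < n" "v < n" "diameter n S = gdist n S u v"
    unfolding M_def diameter_def by auto
  define D where "D = gdist n S u v"
  obtain p where p: "p 0 = u" "p D = v" "iswalk n S p D"
    using gdist_walk[OF conn[OF uv(1,2)]] walk_iff D_def by metis
  have "real D \<le> 4 * log 2 (real n)" using diam_path[OF p(3) _ n2] p D_def by simp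
  then show "real (diameter n S) \<le> 4 * log 2 (real n)" using uv D_def by simp
qed (simp)


end
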